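(* Consider the system $x_{k+1}=F(x_k,u_k,w_k,v_k)$, $y_k=H(x_k,u_k,w_k,v_k)$ with $x_k\in\mathbb{X}$, $u_k\in\mathbb{U}$, $w_k\in\mathbb{W}$, $v_k\in\mathbb{V}$, $y_k\in\mathbb{Y}$. For pairs of trajectories $(\boldsymbol{x},\boldsymbol{u},\boldsymbol{w},\boldsymbol{v},\boldsymbol{y})$, $(\widetilde{\boldsymbol{x}},\boldsymbol{u},\widetilde{\boldsymbol{w}},\widetilde{\boldsymbol{v}},\widetilde{\boldsymbol{y}})$ write $\delta x_k=x_k-\widetilde{x}_k$, $\delta v_k=v_k-\widetilde{v}_k$, $\delta y_k=y_k-\widetilde{y}_k$. There exist $\gamma_0\in\mathcal{KL}$ and $\gamma_v,\gamma_y\in\mathcal{K}$ such that $$\|\delta x_k\|\le\max\big(\gamma_0(\|\delta x_0\|,k),\ \gamma_v(\|\delta\boldsymbol{v}\|_{[0,k-1]}),\ \gamma_y(\|\delta\boldsymbol{y}\|_{[0,k-1]})\big)$$ for all $k\ge0$ and all such pairs of trajectories, if and only if there exist $\overline{\gamma}_0,\overline{\gamma}_v,\overline{\gamma}_y\in\mathcal{KL}$ such that $$\|\delta x_k\|\le\max\Big(\max_{j\in\{0,\dots,k-1\}}\overline{\gamma}_v(\|\delta v_j\|,k-j-1),\ \overline{\gamma}_0(\|\delta x_0\|,k),\ \max_{j\in\{0,\dots,k-1\}}\overline{\gamma}_y(\|\delta y_j\|,k-j-1)\Big)$$ for all $k\ge0$ and all such pairs of trajectories.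
   Context: $\|\boldsymbol{x}\|_{[a,b]}:=\max_{i\in\{a,\dots,b\}}\|x_i\|$. $\mathcal{K}$ and $\mathcal{KL}$ are the usual comparison function classes: $\alpha\in\mathcal{K}$ if continuous, strictly increasing, $\alpha(0)=0$; $\beta\in\mathcal{KL}$ if $\beta(\cdot,k)\in\mathcal{K}$ for each $k$ and $\beta(r,\cdot)$ is non-increasing with limit $0$. A trajectory is a sequence satisfying the system equations for all $k$. *)

theory Defs
  imports "HOL-Analysis.Analysis"
begin

definition class_K :: "(real \<Rightarrow> real) \<Rightarrow> bool" where
  "class_K \<alpha> \<longleftrightarrow> continuous_on {0..} \<alpha> \<and> strict_mono_on {0..} \<alpha> \<and> \<alpha> 0 = 0"

definition class_KL :: "(real \<Rightarrow> nat \<Rightarrow> real) \<Rightarrow> bool" where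
  "class_KL \<beta> \<longleftrightarrow> (\<forall>k. class_K (\<lambda>r. \<beta> r k)) \<and>
     (\<forall>r\<ge>0. antimono (\<lambda>k. \<beta> r k) \<and> (\<lambda>k. \<beta> r k) \<longlonglongrightarrow> 0)"

definition trajectory ::
  "('x \<Rightarrow> 'u \<Rightarrow> 'w \<Rightarrow> 'v \<Rightarrow> 'x) \<Rightarrow> ('x \<Rightarrow> 'u \<Rightarrow> 'w \<Rightarrow> 'v \<Rightarrow> 'y) \<Rightarrow>
   'x set \<Rightarrow> 'u set \<Rightarrow> 'w set \<Rightarrow> 'v set \<Rightarrow> 'y set \<Rightarrow>
   (nat \<Rightarrow> 'x) \<Rightarrow> (nat \<Rightarrow> 'u) \<Rightarrow> (nat \<Rightarrow> 'w) \<Rightarrow> (nat \<Rightarrow> 'v) \<Rightarrow> (nat \<Rightarrow> 'y) \<Rightarrow> bool" where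
  "trajectory F H XX UU WW VV YY x u w v y \<longleftrightarrow>
     (\<forall>k. x k \<in> XX \<and> u k \<in> UU \<and> w k \<in> WW \<and> v k \<in> VV \<and> y k \<in> YY \<and>
          x (Suc k) = F (x k) (u k) (w k) (v k) \<and> y k = H (x k) (u k) (w k) (v k))"

definition seg_norm :: "(nat \<Rightarrow> 'a::real_normed_vector) \<Rightarrow> nat \<Rightarrow> real" where
  "seg_norm f k = Max (insert 0 ((\<lambda>i. norm (f i)) ` {..<k}))"

definition fading_max :: "(real \<Rightarrow> nat \<Rightarrow> real) \<Rightarrow> (nat \<Rightarrow> 'a::real_normed_vector) \<Rightarrow> nat \<Rightarrow> real" where
  "fading_max g f k = Max (insert 0 ((\<lambda>j. g (norm (f j)) (k - j - 1)) ` {..<k}))"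

end

theory Submission
  imports Defs
begin

lemma K_mono: "class_K a \<Longrightarrow> 0 \<le> r \<Longrightarrow> r \<le> r' \<Longrightarrow> a r \<le> a r'"
  unfolding class_K_def by (auto intro: strict_mono_on_leD)

lemma K_nn: "class_K a \<Longrightarrow> 0 \<le> r \<Longrightarrow> 0 \<le> a r"
  using K_mono[of a 0 r] by (simp add: class_K_def)

lemma KL_K: "class_KL g \<Longrightarrow> class_K (\<lambda>r. g r t)"
  unfolding class_KL_def by auto

lemma KL_mono: "class_KL g \<Longrightarrow> 0 \<le> r \<Longrightarrow> r \<le> r' \<Longrightarrow> g r t \<le> g r' t"
  using K_mono[OF KL_K] by blast

lemma KL_nn: "class_KL g \<Longrightarrow> 0 \<le> r \<Longrightarrow> 0 \<le> g r t"
  using K_nn[OF KL_K] by blast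

lemma KL_anti: "class_KL g \<Longrightarrow> 0 \<le> r \<Longrightarrow> t \<le> t' \<Longrightarrow> g r t' \<le> g r t"
  unfolding class_KL_def by (auto simp: antimono_def)

lemma KL_lim: "class_KL g \<Longrightarrow> 0 \<le> r \<Longrightarrow> (\<lambda>t. g r t) \<longlonglongrightarrow> 0"
  unfolding class_KL_def by auto

lemma K_at0: "class_K a \<Longrightarrow> (a \<longlongrightarrow> 0) (at 0 within {0..})"
  unfolding class_K_def continuous_on_def by (metis atLeast_iff order_refl)

lemma majorant:
  fixes \<psi> :: "real \<Rightarrow> nat \<Rightarrow> real" and a :: "real \<Rightarrow> real"
  assumes aK: "class_K a"
  and nn: "\<And>s t. 0 \<le> s \<Longrightarrow> 0 \<le> \<psi> s t"
  and mono: "\<And>s s' t. 0 \<le> s \<Longrightarrow> s \<le> s' \<Longrightarrow> \<psi> s t \<le> \<psi> s' t"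
  and anti: "\<And>s t t'. 0 \<le> s \<Longrightarrow> t \<le> t' \<Longrightarrow> \<psi> s t' \<le> \<psi> s t"
  and lim: "\<And>s. 0 \<le> s \<Longrightarrow> (\<lambda>t. \<psi> s t) \<longlonglongrightarrow> 0"
  and bnd: "\<And>s t. 0 \<le> s \<Longrightarrow> \<psi> s t \<le> a s"
  shows "\<exists>\<beta>. class_KL \<beta> \<and> (\<forall>s\<ge>0. \<forall>t. \<psi> s t \<le> \<beta> s t)"
proof -
  define h where "h t s = (if s \<le> 0 then 0 else integral {s..2 * s} (\<lambda>r. \<psi> r t) / s)" for t s
  define \<beta> where "\<beta> s t = h t s + s / (real t + 1)" for s t
  have intg: "(\<lambda>r. \<psi> r t) integrable_on {c..d}" if "0 \<le> c" for c d t
    by (rule integrable_on_mono_on) (use that in \<open>auto simp: mono_on_def intro: mono\<close>)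
  have lower: "s * \<psi> s t \<le> integral {s..2 * s} (\<lambda>r. \<psi> r t)" if "0 < s" for s t
  proof -
    have "integral {s..2 * s} (\<lambda>r. \<psi> s t) \<le> integral {s..2 * s} (\<lambda>r. \<psi> r t)"
      by (rule integral_le) (use that in \<open>auto intro: intg mono\<close>)
    then show ?thesis using that by simp
  qed
  have upper: "integral {s..2 * s} (\<lambda>r. \<psi> r t) \<le> s * \<psi> (2 * s) t" if "0 < s" for s t
  proof -
    have "integral {s..2 * s} (\<lambda>r. \<psi> r t) \<le> integral {s..2 * s} (\<lambda>r. \<psi> (2 * s) t)"
      by (rule integral_le) (use that in \<open>auto intro: intg mono\<close>)
    then show ?thesis using that by simp
  qed
  have hlow: "\<psi> s t \<le> h t s" if "0 < s" for s t
    using lower[OF that, of t] that by (simp add: h_def field_simps)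
  have hup: "h t s \<le> \<psi> (2 * s) t" if "0 < s" for s t
    using upper[OF that, of t] that by (simp add: h_def field_simps)
  have hnn: "0 \<le> h t s" if "0 \<le> s" for s t
    using hlow[of s t] nn[of s t] that by (cases "s = 0") (auto simp: h_def)
  have hsub: "h t s = integral {1..2} (\<lambda>u. \<psi> (s * u) t)" if "0 < s" for s t
  proof -
    have "((\<lambda>r. \<psi> r t) has_integral integral {s..2 * s} (\<lambda>r. \<psi> r t)) (cbox s (2 * s))"
      using intg[of s t "2 * s"] that by (simp add: integrable_integral)
    from has_integral_affinity'[OF this that, of 0]
    have "((\<lambda>u. \<psi> (s * u) t) has_integral (integral {s..2 * s} (\<lambda>r. \<psi> r t) / s)) {1..2}"
      using that by (simp add: field_simps)
    then show ?thesis using that by (simp add: h_def integral_unique)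
  qed
  have hsubi: "(\<lambda>u. \<psi> (s * u) t) integrable_on {1..2}" if "0 < s" for s t
  proof -
    have "((\<lambda>r. \<psi> r t) has_integral integral {s..2 * s} (\<lambda>r. \<psi> r t)) (cbox s (2 * s))"
      using intg[of s t "2 * s"] that by (simp add: integrable_integral)
    from has_integral_affinity'[OF this that, of 0]
    show ?thesis using that by (auto simp: field_simps integrable_on_def)
  qed
  have hmono: "h t s \<le> h t s'" if "0 \<le> s" "s \<le> s'" for s s' t
  proof (cases "s = 0")
    case True then show ?thesis using hnn[of s' t] that by (simp add: h_def)
  next
    case False
    then have "0 < s" "0 < s'" using that by auto
    then show ?thesis
      unfolding hsub[OF \<open>0 < s\<close>] hsub[OF \<open>0 < s'\<close>]
      by (intro integral_le hsubi) (use that in \<open>auto intro!: mono mult_right_mono\<close>)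
  qed
  have hanti: "h t' s \<le> h t s" if "t \<le> t'" for s t t'
  proof (cases "s \<le> 0")
    case True then show ?thesis by (simp add: h_def)
  next
    case False
    then have "0 < s" by simp
    then show ?thesis
      unfolding hsub[OF \<open>0 < s\<close>] using that
      by (intro integral_le hsubi) (auto intro!: anti)
  qed
  have a2: "((\<lambda>s. a (2 * s)) \<longlongrightarrow> 0) (at 0 within {0..})"
  proof -
    have "continuous_on {0..} (\<lambda>s. a (2 * s))"
      by (rule continuous_on_compose2[of "{0..}" a]) (use aK in \<open>auto simp: class_K_def intro!: continuous_intros\<close>)
    then show ?thesis using aK unfolding continuous_on_def class_K_def
      by (metis atLeast_iff mult_zero_right order_refl)
  qed
  have hcont0: "continuous (at 0 within {0..}) (h t)" for t
  proof -
    have "(h t \<longlongrightarrow> 0) (at 0 within {0..})"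
    proof (rule tendsto_sandwich[OF _ _ tendsto_const a2])
      show "\<forall>\<^sub>F s in at 0 within {0..}. 0 \<le> h t s"
        unfolding eventually_at_filter by (auto intro!: always_eventually hnn)
      show "\<forall>\<^sub>F s in at 0 within {0..}. h t s \<le> a (2 * s)"
        unfolding eventually_at_filter
      proof (intro always_eventually allI impI)
        fix s :: real assume "s \<in> {0..}" "s \<noteq> 0"
        then have "0 < s" by auto
        then show "h t s \<le> a (2 * s)" using hup[of s t] bnd[of "2 * s" t] by simp
      qed
    qed
    then show ?thesis by (simp add: continuous_within h_def)
  qed
  have hcontp: "continuous (at s0 within {0..}) (h t)" if "0 < s0" for s0 t
  proof -
    define F where "F x = integral {0..x} (\<lambda>r. \<psi> r t)" for x
    have Fc: "continuous_on {0..4 * s0} F"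
      unfolding F_def by (rule indefinite_integral_continuous_1) (rule intg, simp)
    have c1: "continuous_on {0<..<2 * s0} (\<lambda>s. (F (2 * s) - F s) / s)"
    proof (intro continuous_intros)
      show "continuous_on {0<..<2 * s0} (\<lambda>s. F (2 * s))"
        by (rule continuous_on_compose2[OF Fc]) (auto intro!: continuous_intros)
      show "continuous_on {0<..<2 * s0} F"
        by (rule continuous_on_subset[OF Fc]) auto
    qed auto
    have eq: "h t s = (F (2 * s) - F s) / s" if "s \<in> {0<..<2 * s0}" for s
    proof -
      have "integral {0..s} (\<lambda>r. \<psi> r t) + integral {s..2 * s} (\<lambda>r. \<psi> r t) = integral {0..2 * s} (\<lambda>r. \<psi> r t)"
        using Henstock_Kurzweil_Integration.integral_combine[of 0 s "2 * s" "\<lambda>r. \<psi> r t"] intg[of 0 t "2 * s"] that by auto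
      then show ?thesis using that by (simp add: h_def F_def algebra_simps)
    qed
    have "continuous_on {0<..<2 * s0} (h t)"
      using continuous_on_eq[OF c1] eq by metis
    then have "isCont (h t) s0"
      using that by (subst (asm) continuous_on_eq_continuous_at) auto
    then show ?thesis by (rule continuous_at_imp_continuous_within)
  qed
  have hcont: "continuous_on {0..} (h t)" for t
    unfolding continuous_on_eq_continuous_within
  proof
    fix s :: real assume "s \<in> {0..}"
    then show "continuous (at s within {0..}) (h t)"
      by (cases "s = 0") (auto intro: hcont0 hcontp)
  qed
  have "class_KL \<beta>"
    unfolding class_KL_def
  proof (intro conjI allI impI)
    fix t
    show "class_K (\<lambda>r. \<beta> r t)"
      unfolding class_K_def
    proof (intro conjI)
      show "continuous_on {0..} (\<lambda>r. \<beta> r t)"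
        unfolding \<beta>_def by (intro continuous_intros hcont) auto
      show "strict_mono_on {0..} (\<lambda>r. \<beta> r t)"
      proof (rule strict_mono_onI)
        fix r r' :: real assume "r \<in> {0..}" "r' \<in> {0..}" "r < r'"
        then have "h t r \<le> h t r'" "r / (real t + 1) < r' / (real t + 1)"
          using hmono[of r r' t] by (auto simp: divide_strict_right_mono)
        then show "\<beta> r t < \<beta> r' t" unfolding \<beta>_def by simp
      qed
      show "\<beta> 0 t = 0" by (simp add: \<beta>_def h_def)
    qed
  next
    fix r :: real assume r: "0 \<le> r"
    show "antimono (\<lambda>t. \<beta> r t)"
    proof (rule antimonoI)
      fix t t' :: nat assume "t \<le> t'"
      then have "h t' r \<le> h t r" "r / (real t' + 1) \<le> r / (real t + 1)"
        using hanti[of t t' r] r by (auto intro!: divide_left_mono)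
      then show "\<beta> r t' \<le> \<beta> r t" unfolding \<beta>_def by simp
    qed
    have l1: "(\<lambda>t. h t r) \<longlonglongrightarrow> 0"
    proof (cases "r = 0")
      case True then show ?thesis by (simp add: h_def)
    next
      case False
      then have "0 < r" using r by simp
      show ?thesis
        by (rule tendsto_sandwich[OF _ _ tendsto_const lim[of "2 * r"]])
           (use \<open>0 < r\<close> hnn hup in \<open>auto intro!: always_eventually\<close>)
    qed
    have l2: "(\<lambda>t. r / (real t + 1)) \<longlonglongrightarrow> 0"
      using LIMSEQ_Suc[OF lim_const_over_n[of r]] by (simp add: add.commute)
    show "(\<lambda>t. \<beta> r t) \<longlonglongrightarrow> 0"
      unfolding \<beta>_def using tendsto_add[OF l1 l2] by simp
  qed
  moreover have "\<psi> s t \<le> \<beta> s t" if "0 \<le> s" for s t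
  proof (cases "s = 0")
    case True
    then show ?thesis using bnd[of 0 t] aK by (simp add: \<beta>_def h_def class_K_def)
  next
    case False
    then have "0 < s" using that by simp
    moreover have "0 \<le> s / (real t + 1)" using that by simp
    ultimately show ?thesis using hlow[of s t] unfolding \<beta>_def by linarith
  qed
  ultimately show ?thesis by blast
qed

definition Wt :: "(real \<Rightarrow> nat \<Rightarrow> real) \<Rightarrow> real \<Rightarrow> nat" where
  "Wt g b = Suc (LEAST t. g (2 * b) t \<le> b)"

function reach :: "(real \<Rightarrow> nat \<Rightarrow> real) \<Rightarrow> real \<Rightarrow> nat \<Rightarrow> real" where
  "reach g b t = (if t < Wt g b then b else reach g (2 * b) (t - Wt g b))"
  by auto
termination by (relation "Wellfounded.measure (\<lambda>(g, b, t). t)") (auto simp: Wt_def)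

function Gok :: "(real \<Rightarrow> nat \<Rightarrow> real) \<Rightarrow> real \<Rightarrow> nat \<Rightarrow> real \<Rightarrow> bool" where
  "Gok g r k b = (if k < Wt g b then g r k \<le> b else Gok g r (k - Wt g b) (2 * b))"
  by auto
termination by (relation "Wellfounded.measure (\<lambda>(g, r, k, b). k)") (auto simp: Wt_def)

declare reach.simps[simp del] Gok.simps[simp del]

lemma Wt_pos: "0 < Wt g b"
  by (simp add: Wt_def)

lemma Wt_ex: "class_KL g \<Longrightarrow> 0 < b \<Longrightarrow> \<exists>t. g (2 * b) t \<le> b"
proof -
  assume g: "class_KL g" and b: "0 < b"
  have "eventually (\<lambda>t. g (2 * b) t < b) sequentially"
    using KL_lim[OF g, of "2 * b"] b by (intro order_tendstoD) auto
  then show ?thesis by (metis eventually_sequentially le_refl less_imp_le)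
qed

lemma Wt_prop: "class_KL g \<Longrightarrow> 0 < b \<Longrightarrow> g (2 * b) (Wt g b) \<le> b"
proof -
  assume g: "class_KL g" and b: "0 < b"
  have "g (2 * b) (LEAST t. g (2 * b) t \<le> b) \<le> b"
    using Wt_ex[OF g b] by (rule LeastI_ex)
  moreover have "g (2 * b) (Wt g b) \<le> g (2 * b) (LEAST t. g (2 * b) t \<le> b)"
    using b by (intro KL_anti[OF g]) (auto simp: Wt_def)
  ultimately show ?thesis by linarith
qed

lemma Wt_le: "g (2 * b) T \<le> b \<Longrightarrow> Wt g b \<le> Suc T"
  unfolding Wt_def by (simp add: Least_le)

lemma reach_ge: "0 < b \<Longrightarrow> b \<le> reach g b t"
proof (induction g b t rule: reach.induct)
  case (1 g b t)
  show ?case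
  proof (cases "t < Wt g b")
    case True then show ?thesis by (subst reach.simps) simp
  next
    case False
    then have "2 * b \<le> reach g (2 * b) (t - Wt g b)" using 1 by simp
    then show ?thesis using False 1(2) by (subst reach.simps) simp
  qed
qed

lemma reach_mono: "0 < b \<Longrightarrow> t \<le> t' \<Longrightarrow> reach g b t \<le> reach g b t'"
proof (induction g b t arbitrary: t' rule: reach.induct)
  case (1 g b t)
  show ?case
  proof (cases "t < Wt g b")
    case True then show ?thesis using reach_ge[OF 1(2), of g t'] by (subst reach.simps) simp
  next
    case False
    then have "\<not> t' < Wt g b" using 1 by simp
    moreover have "reach g (2 * b) (t - Wt g b) \<le> reach g (2 * b) (t' - Wt g b)"
      using 1 False by simp
    ultimately show ?thesis using False by (simp add: reach.simps[of g b t] reach.simps[of g b t'])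
  qed
qed

lemma sum_shift2: "(\<Sum>m<Suc n. Wt g (2 ^ m * b)) = Wt g b + (\<Sum>m<n. Wt g (2 ^ m * (2 * b)))"
  by (subst sum.lessThan_Suc_shift) (simp add: mult.assoc mult.left_commute)

lemma reach_big: "0 < b \<Longrightarrow> (\<Sum>m<n. Wt g (2 ^ m * b)) \<le> t \<Longrightarrow> 2 ^ n * b \<le> reach g b t"
proof (induction n arbitrary: b t)
  case 0 then show ?case using reach_ge by simp
next
  case (Suc n)
  have W: "Wt g b \<le> t" "(\<Sum>m<n. Wt g (2 ^ m * (2 * b))) \<le> t - Wt g b"
    using Suc(3) unfolding sum_shift2 by auto
  then have "\<not> t < Wt g b" by simp
  then have "reach g b t = reach g (2 * b) (t - Wt g b)" by (subst reach.simps) simp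
  moreover have "2 ^ n * (2 * b) \<le> reach g (2 * b) (t - Wt g b)"
    using Suc W by simp
  ultimately show ?case by (simp add: mult.assoc mult.left_commute)
qed

lemma Gok_big: "class_KL g \<Longrightarrow> 0 \<le> r \<Longrightarrow> 0 < b \<Longrightarrow> g r 0 \<le> b \<Longrightarrow> Gok g r k b"
proof (induction g r k b rule: Gok.induct)
  case (1 g r k b)
  show ?case
  proof (cases "k < Wt g b")
    case True
    have "g r k \<le> g r 0" using KL_anti[OF 1(2,3)] by simp
    then show ?thesis using True 1 by (subst Gok.simps) simp
  next
    case False
    then show ?thesis using 1 by (subst Gok.simps) simp
  qed
qed

lemma Gok_mono_r: "class_KL g \<Longrightarrow> 0 \<le> r \<Longrightarrow> r \<le> r' \<Longrightarrow> Gok g r' k b \<Longrightarrow> Gok g r k b"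
proof (induction g r k b rule: Gok.induct)
  case (1 g r k b)
  show ?case
  proof (cases "k < Wt g b")
    case True
    then show ?thesis using 1 KL_mono[OF 1(2,3,4), of k] by (simp add: Gok.simps[of g r k b] Gok.simps[of g r' k b])
  next
    case False
    then show ?thesis using 1 by (simp add: Gok.simps[of g r k b] Gok.simps[of g r' k b])
  qed
qed

lemma Gok_suff:
  "class_KL g \<Longrightarrow> 0 \<le> r \<Longrightarrow> 0 < b \<Longrightarrow> g r 0 \<le> 2 ^ n * b \<Longrightarrow>
   g r (k - (\<Sum>m<n. Wt g (2 ^ m * b))) \<le> b \<Longrightarrow> Gok g r k b"
proof (induction n arbitrary: b k)
  case 0 then show ?case using Gok_big by simp
next
  case (Suc n)
  show ?case
  proof (cases "k < Wt g b")
    case True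
    have "g r k \<le> g r (k - (\<Sum>m<Suc n. Wt g (2 ^ m * b)))"
      by (rule KL_anti[OF Suc(2,3)]) simp
    then show ?thesis using True Suc by (subst Gok.simps) simp
  next
    case False
    have "Gok g r (k - Wt g b) (2 * b)"
    proof (rule Suc.IH)
      show "g r 0 \<le> 2 ^ n * (2 * b)" using Suc(5) by (simp add: mult.assoc mult.left_commute)
      have "g r (k - Wt g b - (\<Sum>m<n. Wt g (2 ^ m * (2 * b)))) \<le> b"
        using Suc(6) unfolding sum_shift2 by (simp add: diff_diff_add)
      then show "g r (k - Wt g b - (\<Sum>m<n. Wt g (2 ^ m * (2 * b)))) \<le> 2 * b"
        using Suc(4) by simp
    qed (use Suc in auto)
    then show ?thesis using False by (subst Gok.simps) simp
  qed
qed

lemma Wsum_bound: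
  assumes g: "class_KL g" and b0: "0 < b0" "b0 \<le> b" "b \<le> E"
    and T1: "g (2 * (2 ^ n * E)) T1 \<le> b0"
  shows "(\<Sum>m<n. Wt g (2 ^ m * b)) \<le> n * Suc T1"
proof -
  have "Wt g (2 ^ m * b) \<le> Suc T1" if "m < n" for m
  proof (rule Wt_le)
    have "(2::real) ^ m \<le> 2 ^ n" using that by (intro power_increasing) auto
    then have "2 ^ m * b \<le> 2 ^ n * E" using b0 by (intro mult_mono) auto
    then have "g (2 * (2 ^ m * b)) T1 \<le> g (2 * (2 ^ n * E)) T1"
      using b0 by (intro KL_mono[OF g]) auto
    also have "\<dots> \<le> b0" by (rule T1)
    also have "b0 \<le> 2 ^ m * b"
      using b0 by (metis dual_order.trans less_imp_le mult_1 mult_right_mono one_le_power one_le_numeral)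
    finally show "g (2 * (2 ^ m * b)) T1 \<le> 2 ^ m * b" .
  qed
  then have "(\<Sum>m<n. Wt g (2 ^ m * b)) \<le> (\<Sum>m<n. Suc T1)" by (intro sum_mono) auto
  then show ?thesis by simp
qed

lemma Max_ins0_le: "finite S \<Longrightarrow> 0 \<le> (b::real) \<Longrightarrow> (\<And>x. x \<in> S \<Longrightarrow> x \<le> b) \<Longrightarrow> Max (insert 0 S) \<le> b"
  by simp

lemma chain:
  fixes s e :: "nat \<Rightarrow> real"
  assumes g: "class_KL g" and sn: "\<And>k. 0 \<le> s k"
  and rs: "\<And>j k. j \<le> k \<Longrightarrow> s k \<le> max (g (s j) (k - j)) (Max (insert 0 (e ` {j..<k})))"
  shows "0 < b \<Longrightarrow> (\<forall>i<k. e i \<le> reach g b (k - 1 - i)) \<Longrightarrow> Gok g (s 0) k b \<Longrightarrow> s k \<le> b"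
proof (induction k arbitrary: b rule: less_induct)
  case (less k)
  show ?case
  proof (cases "k < Wt g b")
    case True
    have "Max (insert 0 (e ` {0..<k})) \<le> b"
    proof (rule Max_ins0_le)
      fix x assume "x \<in> e ` {0..<k}"
      then obtain i where i: "i < k" "x = e i" by auto
      then have "k - 1 - i < Wt g b" using True by simp
      then have "reach g b (k - 1 - i) = b" by (subst reach.simps) simp
      then show "x \<le> b" using less.prems(2) i by auto
    qed (use less.prems in auto)
    moreover have "g (s 0) k \<le> b" using less.prems(3) True by (subst (asm) Gok.simps) simp
    ultimately have "max (g (s 0) k) (Max (insert 0 (e ` {0..<k}))) \<le> b" by (intro max.boundedI)
    then show ?thesis by (intro order_trans[OF rs[of 0 k]]) auto
  next
    case False
    define j where "j = k - Wt g b"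
    have jk: "j < k" "k - j = Wt g b" using False Wt_pos[of g b] by (auto simp: j_def)
    have "s j \<le> 2 * b"
    proof (rule less.IH[OF jk(1)])
      show "0 < 2 * b" using less.prems by simp
      show "\<forall>i<j. e i \<le> reach g (2 * b) (j - 1 - i)"
      proof (intro allI impI)
        fix i assume "i < j"
        then have "\<not> k - 1 - i < Wt g b" "k - 1 - i - Wt g b = j - 1 - i" using jk by auto
        then have "reach g b (k - 1 - i) = reach g (2 * b) (j - 1 - i)"
          by (subst reach.simps) simp
        moreover have "e i \<le> reach g b (k - 1 - i)" using less.prems(2) \<open>i < j\<close> jk by simp
        ultimately show "e i \<le> reach g (2 * b) (j - 1 - i)" by simp
      qed
      show "Gok g (s 0) j (2 * b)" using less.prems(3) False by (subst (asm) Gok.simps) (simp add: j_def)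
    qed
    have "Max (insert 0 (e ` {j..<k})) \<le> b"
    proof (rule Max_ins0_le)
      fix x assume "x \<in> e ` {j..<k}"
      then obtain i where i: "j \<le> i" "i < k" "x = e i" by auto
      then have "k - 1 - i < Wt g b" using jk by auto
      then have "reach g b (k - 1 - i) = b" by (subst reach.simps) simp
      then show "x \<le> b" using less.prems(2) i by auto
    qed (use less.prems in auto)
    moreover have "g (s j) (k - j) \<le> b"
    proof -
      have "g (s j) (k - j) \<le> g (2 * b) (Wt g b)"
        unfolding jk(2) by (rule KL_mono[OF g sn \<open>s j \<le> 2 * b\<close>])
      also have "\<dots> \<le> b" by (rule Wt_prop[OF g less.prems(1)])
      finally show ?thesis .
    qed
    ultimately have "max (g (s j) (k - j)) (Max (insert 0 (e ` {j..<k}))) \<le> b" by (intro max.boundedI)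
    then show ?thesis using jk by (intro order_trans[OF rs[of j k]]) auto
  qed
qed

definition psiE :: "(real \<Rightarrow> nat \<Rightarrow> real) \<Rightarrow> real \<Rightarrow> nat \<Rightarrow> real" where
  "psiE g e t = Sup (insert 0 {b. 0 < b \<and> reach g b t < e})"

definition psi0 :: "(real \<Rightarrow> nat \<Rightarrow> real) \<Rightarrow> real \<Rightarrow> nat \<Rightarrow> real" where
  "psi0 g r k = Sup (insert 0 {b. 0 < b \<and> (\<exists>k'\<ge>k. \<not> Gok g r k' b)})"

lemma psiE_bdd: "bdd_above (insert 0 {b. 0 < b \<and> reach g b t < e})"
proof (rule bdd_aboveI[of _ "max 0 e"])
  fix x assume "x \<in> insert 0 {b. 0 < b \<and> reach g b t < e}"
  then show "x \<le> max 0 e" using reach_ge[of x g t] by auto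
qed

lemma psiE_bdd': "bdd_above {b. 0 < b \<and> reach g b t < e}"
  using psiE_bdd[of g t e] by simp

lemma psiE_key: "0 < b \<Longrightarrow> psiE g e t < b \<Longrightarrow> e \<le> reach g b t"
proof (rule ccontr)
  assume "0 < b" "psiE g e t < b" "\<not> e \<le> reach g b t"
  then have "b \<le> psiE g e t" unfolding psiE_def by (intro cSup_upper psiE_bdd) auto
  then show False using \<open>psiE g e t < b\<close> by simp
qed

lemma psiE_nn: "0 \<le> psiE g e t"
  unfolding psiE_def by (intro cSup_upper psiE_bdd) auto

lemma psiE_le: "0 \<le> e \<Longrightarrow> psiE g e t \<le> e"
  unfolding psiE_def by (rule cSup_least) (use reach_ge[of _ g t] in force)+

lemma psiE_mono: "e \<le> e' \<Longrightarrow> psiE g e t \<le> psiE g e' t"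
  unfolding psiE_def by (rule cSup_subset_mono) (auto intro: psiE_bdd psiE_bdd')

lemma psiE_anti: "t \<le> t' \<Longrightarrow> psiE g e t' \<le> psiE g e t"
  unfolding psiE_def
proof (rule cSup_subset_mono)
  assume "t \<le> t'"
  then show "insert 0 {b. 0 < b \<and> reach g b t' < e} \<subseteq> insert 0 {b. 0 < b \<and> reach g b t < e}"
    using reach_mono[of _ t t' g] by force
qed (auto intro: psiE_bdd psiE_bdd')

lemma reach_unif:
  assumes g: "class_KL g" and b0: "0 < b0"
  shows "\<exists>T. \<forall>t\<ge>T. \<forall>b\<ge>b0. e \<le> reach g b t"
proof -
  define E where "E = max e b0"
  have E: "0 < E" "e \<le> E" "b0 \<le> E" using b0 by (auto simp: E_def)
  obtain n where n: "E / b0 < 2 ^ n" using real_arch_pow[of 2 "E / b0"] by auto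
  then have n': "E \<le> 2 ^ n * b0" using b0 by (simp add: field_simps)
  obtain T1 where T1: "g (2 * (2 ^ n * E)) T1 \<le> b0"
    using Wt_ex[OF g b0] eventually_sequentially KL_lim[OF g, of "2 * (2 ^ n * E)"] E b0
    by (metis (no_types, lifting) less_eq_real_def nle_le order_tendstoD(2) zero_le_mult_iff zero_le_numeral zero_le_power)
  show ?thesis
  proof (intro exI allI impI)
    fix t b assume t: "n * Suc T1 \<le> t" and b: "b0 \<le> b"
    show "e \<le> reach g b t"
    proof (cases "E \<le> b")
      case True then show ?thesis using reach_ge[of b g t] E b0 b by auto
    next
      case False
      have "(\<Sum>m<n. Wt g (2 ^ m * b)) \<le> n * Suc T1"
        by (rule Wsum_bound[OF g b0 b _ T1]) (use False in auto)
      then have "2 ^ n * b \<le> reach g b t" using b b0 t by (intro reach_big) auto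
      moreover have "2 ^ n * b0 \<le> 2 ^ n * b" using b by simp
      ultimately show ?thesis using n' E by linarith
    qed
  qed
qed

lemma psiE_lim: assumes g: "class_KL g" shows "(\<lambda>t. psiE g e t) \<longlonglongrightarrow> 0"
proof (rule order_tendstoI)
  fix y :: real assume "y < 0"
  then show "\<forall>\<^sub>F t in sequentially. y < psiE g e t" using psiE_nn[of g e] by (auto intro: always_eventually less_le_trans)
next
  fix y :: real assume y: "0 < y"
  obtain T where T: "\<And>t b. T \<le> t \<Longrightarrow> y / 2 \<le> b \<Longrightarrow> e \<le> reach g b t"
    using reach_unif[OF g, of "y / 2" e] y by auto
  show "\<forall>\<^sub>F t in sequentially. psiE g e t < y"
    unfolding eventually_sequentially
  proof (intro exI allI impI)
    fix t assume "T \<le> t"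
    have "psiE g e t \<le> y / 2"
      unfolding psiE_def
    proof (rule cSup_least)
      fix x assume "x \<in> insert 0 {b. 0 < b \<and> reach g b t < e}"
      then show "x \<le> y / 2" using T[OF \<open>T \<le> t\<close>, of x] y by force
    qed auto
    then show "psiE g e t < y" using y by simp
  qed
qed

lemma psi0_bdd:
  assumes g: "class_KL g" and r: "0 \<le> r"
  shows "bdd_above (insert 0 {b. 0 < b \<and> (\<exists>k'\<ge>k. \<not> Gok g r k' b)})"
proof (rule bdd_aboveI[of _ "g r 0"])
  fix x assume "x \<in> insert 0 {b. 0 < b \<and> (\<exists>k'\<ge>k. \<not> Gok g r k' b)}"
  then show "x \<le> g r 0" using Gok_big[OF g r, of x] KL_nn[OF g r, of 0] by force
qed

lemma psi0_key: "class_KL g \<Longrightarrow> 0 \<le> r \<Longrightarrow> 0 < b \<Longrightarrow> psi0 g r k < b \<Longrightarrow> Gok g r k b"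
proof (rule ccontr)
  assume g: "class_KL g" and r: "0 \<le> r" and "0 < b" "psi0 g r k < b" "\<not> Gok g r k b"
  then have "b \<le> psi0 g r k" unfolding psi0_def by (intro cSup_upper psi0_bdd) auto
  then show False using \<open>psi0 g r k < b\<close> by simp
qed

lemma psi0_nn: "class_KL g \<Longrightarrow> 0 \<le> r \<Longrightarrow> 0 \<le> psi0 g r k"
  unfolding psi0_def by (intro cSup_upper psi0_bdd) auto

lemma psi0_le: "class_KL g \<Longrightarrow> 0 \<le> r \<Longrightarrow> psi0 g r k \<le> g r 0"
  unfolding psi0_def by (rule cSup_least) (use Gok_big[of g r] KL_nn[of g r 0] in force)+

lemma psi0_mono: "class_KL g \<Longrightarrow> 0 \<le> r \<Longrightarrow> r \<le> r' \<Longrightarrow> psi0 g r k \<le> psi0 g r' k"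
  unfolding psi0_def by (rule cSup_subset_mono) (use Gok_mono_r[of g r r'] psi0_bdd[of g r'] in auto)

lemma psi0_anti: assumes "class_KL g" "0 \<le> r" "k \<le> k'" shows "psi0 g r k' \<le> psi0 g r k"
  unfolding psi0_def
proof (rule cSup_subset_mono)
  show "bdd_above (insert 0 {b. 0 < b \<and> (\<exists>k'\<ge>k. \<not> Gok g r k' b)})" by (rule psi0_bdd[OF assms(1,2)])
  show "insert 0 {b. 0 < b \<and> (\<exists>k''\<ge>k'. \<not> Gok g r k'' b)} \<subseteq> insert 0 {b. 0 < b \<and> (\<exists>k'\<ge>k. \<not> Gok g r k' b)}"
    using assms(3) by (auto intro: le_trans)
qed auto

lemma Gok_unif:
  assumes g: "class_KL g" and r: "0 \<le> r" and b0: "0 < b0"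
  shows "\<exists>K. \<forall>k\<ge>K. \<forall>b\<ge>b0. Gok g r k b"
proof -
  define E where "E = max (g r 0) b0"
  have E: "0 < E" "g r 0 \<le> E" "b0 \<le> E" using b0 by (auto simp: E_def)
  obtain n where n: "E / b0 < 2 ^ n" using real_arch_pow[of 2 "E / b0"] by auto
  then have n': "E \<le> 2 ^ n * b0" using b0 by (simp add: field_simps)
  obtain T1 where T1: "g (2 * (2 ^ n * E)) T1 \<le> b0"
    using eventually_sequentially KL_lim[OF g, of "2 * (2 ^ n * E)"] E b0
    by (metis (no_types, lifting) less_eq_real_def nle_le order_tendstoD(2) zero_le_mult_iff zero_le_numeral zero_le_power)
  obtain K0 where K0: "g r K0 \<le> b0"
    using eventually_sequentially KL_lim[OF g r] b0
    by (metis (no_types, lifting) less_eq_real_def nle_le order_tendstoD(2))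
  show ?thesis
  proof (intro exI allI impI)
    fix k b assume k: "n * Suc T1 + K0 \<le> k" and b: "b0 \<le> b"
    show "Gok g r k b"
    proof (cases "g r 0 \<le> b")
      case True then show ?thesis using Gok_big[OF g r] b0 b by auto
    next
      case False
      have S: "(\<Sum>m<n. Wt g (2 ^ m * b)) \<le> n * Suc T1"
        by (rule Wsum_bound[OF g b0 b _ T1]) (use False E in auto)
      show ?thesis
      proof (rule Gok_suff[OF g r])
        show "0 < b" using b0 b by simp
        have "2 ^ n * b0 \<le> 2 ^ n * b" using b by simp
        then show "g r 0 \<le> 2 ^ n * b" using n' E by linarith
        have "g r (k - (\<Sum>m<n. Wt g (2 ^ m * b))) \<le> g r K0"
          using S k by (intro KL_anti[OF g r]) auto
        then show "g r (k - (\<Sum>m<n. Wt g (2 ^ m * b))) \<le> b" using K0 b by linarith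
      qed
    qed
  qed
qed

lemma psi0_lim: assumes g: "class_KL g" and r: "0 \<le> r" shows "(\<lambda>k. psi0 g r k) \<longlonglongrightarrow> 0"
proof (rule order_tendstoI)
  fix y :: real assume "y < 0"
  then show "\<forall>\<^sub>F t in sequentially. y < psi0 g r t" using psi0_nn[OF g r] by (auto intro: always_eventually less_le_trans)
next
  fix y :: real assume y: "0 < y"
  obtain K where K: "\<And>k b. K \<le> k \<Longrightarrow> y / 2 \<le> b \<Longrightarrow> Gok g r k b"
    using Gok_unif[OF g r, of "y / 2"] y by auto
  show "\<forall>\<^sub>F t in sequentially. psi0 g r t < y"
    unfolding eventually_sequentially
  proof (intro exI allI impI)
    fix k assume "K \<le> k"
    have "psi0 g r k \<le> y / 2"
      unfolding psi0_def
    proof (rule cSup_least)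
      fix x assume "x \<in> insert 0 {b. 0 < b \<and> (\<exists>k'\<ge>k. \<not> Gok g r k' b)}"
      then show "x \<le> y / 2"
      proof
        assume "x \<in> {b. 0 < b \<and> (\<exists>k'\<ge>k. \<not> Gok g r k' b)}"
        then obtain k' where "k \<le> k'" "\<not> Gok g r k' x" by auto
        then show ?thesis using K[of k' x] \<open>K \<le> k\<close> by fastforce
      qed (use y in auto)
    qed auto
    then show "psi0 g r k < y" using y by simp
  qed
qed

lemma KL_comp:
  assumes s: "class_KL \<sigma>" and g: "class_K \<gamma>"
  shows "class_KL (\<lambda>r t. \<sigma> (\<gamma> r) t)"
  unfolding class_KL_def
proof (intro conjI allI impI)
  fix k
  have sk: "class_K (\<lambda>r. \<sigma> r k)" by (rule KL_K[OF s])
  have gc: "continuous_on {0..} \<gamma>" and gs: "strict_mono_on {0..} \<gamma>" and g0: "\<gamma> 0 = 0"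
    using g by (auto simp: class_K_def)
  have sc: "continuous_on {0..} (\<lambda>r. \<sigma> r k)" and ss: "strict_mono_on {0..} (\<lambda>r. \<sigma> r k)" and s0: "\<sigma> 0 k = 0"
    using sk by (auto simp: class_K_def)
  have img: "\<gamma> ` {0..} \<subseteq> {0..}" using K_nn[OF g] by auto
  show "class_K (\<lambda>r. \<sigma> (\<gamma> r) k)"
    unfolding class_K_def
  proof (intro conjI)
    show "continuous_on {0..} (\<lambda>r. \<sigma> (\<gamma> r) k)"
      by (rule continuous_on_compose2[OF sc gc img])
    show "strict_mono_on {0..} (\<lambda>r. \<sigma> (\<gamma> r) k)"
    proof (rule strict_mono_onI)
      fix r r' :: real assume r: "r \<in> {0..}" "r' \<in> {0..}" "r < r'"
      have "\<gamma> r < \<gamma> r'" by (rule strict_mono_onD[OF gs r])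
      moreover have "\<gamma> r \<in> {0..}" "\<gamma> r' \<in> {0..}" using img r(1,2) by blast+
      ultimately show "\<sigma> (\<gamma> r) k < \<sigma> (\<gamma> r') k"
        using strict_mono_onD[OF ss] by blast
    qed
    show "\<sigma> (\<gamma> 0) k = 0" using g0 s0 by simp
  qed
next
  fix r :: real assume r: "0 \<le> r"
  then have "0 \<le> \<gamma> r" using K_nn[OF g] by simp
  then show "antimono (\<lambda>k. \<sigma> (\<gamma> r) k)" "(\<lambda>k. \<sigma> (\<gamma> r) k) \<longlonglongrightarrow> 0"
    using s unfolding class_KL_def by auto
qed


lemma traj_shift:
  assumes "trajectory F H XX UU WW VV YY x u w v y"
  shows "trajectory F H XX UU WW VV YY (\<lambda>i. x (i + j)) (\<lambda>i. u (i + j)) (\<lambda>i. w (i + j)) (\<lambda>i. v (i + j)) (\<lambda>i. y (i + j))"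
  unfolding trajectory_def
proof
  fix k
  have eq: "Suc k + j = Suc (k + j)" by simp
  have A: "x (k + j) \<in> XX \<and> u (k + j) \<in> UU \<and> w (k + j) \<in> WW \<and> v (k + j) \<in> VV \<and> y (k + j) \<in> YY \<and>
          x (Suc (k + j)) = F (x (k + j)) (u (k + j)) (w (k + j)) (v (k + j)) \<and>
          y (k + j) = H (x (k + j)) (u (k + j)) (w (k + j)) (v (k + j))"
    using assms unfolding trajectory_def by blast
  show "x (k + j) \<in> XX \<and> u (k + j) \<in> UU \<and> w (k + j) \<in> WW \<and> v (k + j) \<in> VV \<and> y (k + j) \<in> YY \<and>
          x (Suc k + j) = F (x (k + j)) (u (k + j)) (w (k + j)) (v (k + j)) \<and>
          y (k + j) = H (x (k + j)) (u (k + j)) (w (k + j)) (v (k + j))"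
    unfolding eq by (rule A)
qed

lemma seg_norm_nn: "0 \<le> seg_norm f k"
  unfolding seg_norm_def by (rule Max_ge) auto

lemma norm_le_seg: "j < k \<Longrightarrow> norm (f j) \<le> seg_norm f k"
  unfolding seg_norm_def by (rule Max_ge) auto

lemma fading_nn: "0 \<le> fading_max g f k"
  unfolding fading_max_def by (rule Max_ge) auto

lemma fading_ge: "j < k \<Longrightarrow> g (norm (f j)) (k - j - 1) \<le> fading_max g f k"
  unfolding fading_max_def by (rule Max_ge) auto

lemma fading_le: "class_KL g \<Longrightarrow> fading_max g f k \<le> g (seg_norm f k) 0"
  unfolding fading_max_def
proof (rule Max_ins0_le)
  assume g: "class_KL g"
  show "0 \<le> g (seg_norm f k) 0" by (rule KL_nn[OF g seg_norm_nn])
  fix x assume "x \<in> (\<lambda>j. g (norm (f j)) (k - j - 1)) ` {..<k}"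
  then obtain j where j: "j < k" "x = g (norm (f j)) (k - j - 1)" by auto
  have "x \<le> g (norm (f j)) 0" unfolding j(2) by (rule KL_anti[OF g]) auto
  also have "\<dots> \<le> g (seg_norm f k) 0" by (rule KL_mono[OF g _ norm_le_seg[OF j(1)]]) simp
  finally show "x \<le> g (seg_norm f k) 0" .
qed auto

lemma seg_bound:
  assumes g: "class_K \<gamma>" and jk: "j \<le> k" and e: "\<And>i. \<gamma> (norm (f i)) \<le> e i"
  shows "\<gamma> (seg_norm (\<lambda>i. f (i + j)) (k - j)) \<le> Max (insert 0 (e ` {j..<k}))"
proof -
  have "seg_norm (\<lambda>i. f (i + j)) (k - j) \<in> insert 0 ((\<lambda>i. norm (f (i + j))) ` {..<k - j})"
    unfolding seg_norm_def by (rule Max_in) auto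
  then show ?thesis
  proof
    assume "seg_norm (\<lambda>i. f (i + j)) (k - j) = 0"
    then show ?thesis using g by (simp add: class_K_def)
  next
    assume "seg_norm (\<lambda>i. f (i + j)) (k - j) \<in> (\<lambda>i. norm (f (i + j))) ` {..<k - j}"
    then obtain i where i: "i < k - j" "seg_norm (\<lambda>i. f (i + j)) (k - j) = norm (f (i + j))" by auto
    have "\<gamma> (norm (f (i + j))) \<le> e (i + j)" by (rule e)
    also have "\<dots> \<le> Max (insert 0 (e ` {j..<k}))" using i by (intro Max_ge) auto
    finally show ?thesis using i by simp
  qed
qed

lemma max_sigma:
  "class_KL \<sigma> \<Longrightarrow> 0 \<le> a \<Longrightarrow> 0 \<le> b \<Longrightarrow> \<sigma> (max a b) t = max (\<sigma> a t) (\<sigma> b t)"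
proof -
  assume s: "class_KL \<sigma>" and a: "0 \<le> a" and b: "0 \<le> b"
  show ?thesis
  proof (cases "a \<le> b")
    case True then show ?thesis using KL_mono[OF s a True, of t] by (simp add: max_def)
  next
    case False then show ?thesis using KL_mono[OF s b, of a t] by (simp add: max_def)
  qed
qed

theorem proposition2:
  fixes F :: "'x::real_normed_vector \<Rightarrow> 'u \<Rightarrow> 'w \<Rightarrow> 'v::real_normed_vector \<Rightarrow> 'x"
    and H :: "'x \<Rightarrow> 'u \<Rightarrow> 'w \<Rightarrow> 'v \<Rightarrow> 'y::real_normed_vector"
    and XX :: "'x set" and UU :: "'u set" and WW :: "'w set" and VV :: "'v set" and YY :: "'y set"
  shows "(\<exists>\<gamma>0 \<gamma>v \<gamma>y. class_KL \<gamma>0 \<and> class_K \<gamma>v \<and> class_K \<gamma>y \<and>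
            (\<forall>x u w v y x' w' v' y' k.
               trajectory F H XX UU WW VV YY x u w v y \<longrightarrow>
               trajectory F H XX UU WW VV YY x' u w' v' y' \<longrightarrow>
               norm (x k - x' k) \<le> max (\<gamma>0 (norm (x 0 - x' 0)) k)
                 (max (\<gamma>v (seg_norm (\<lambda>i. v i - v' i) k)) (\<gamma>y (seg_norm (\<lambda>i. y i - y' i) k)))))
     \<longleftrightarrow>
         (\<exists>g0 gv gy. class_KL g0 \<and> class_KL gv \<and> class_KL gy \<and>
            (\<forall>x u w v y x' w' v' y' k.
               trajectory F H XX UU WW VV YY x u w v y \<longrightarrow>
               trajectory F H XX UU WW VV YY x' u w' v' y' \<longrightarrow>
               norm (x k - x' k) \<le> max (fading_max gv (\<lambda>i. v i - v' i) k)
                 (max (g0 (norm (x 0 - x' 0)) k) (fading_max gy (\<lambda>i. y i - y' i) k))))"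
proof
  assume "\<exists>\<gamma>0 \<gamma>v \<gamma>y. class_KL \<gamma>0 \<and> class_K \<gamma>v \<and> class_K \<gamma>y \<and>
            (\<forall>x u w v y x' w' v' y' k.
               trajectory F H XX UU WW VV YY x u w v y \<longrightarrow>
               trajectory F H XX UU WW VV YY x' u w' v' y' \<longrightarrow>
               norm (x k - x' k) \<le> max (\<gamma>0 (norm (x 0 - x' 0)) k)
                 (max (\<gamma>v (seg_norm (\<lambda>i. v i - v' i) k)) (\<gamma>y (seg_norm (\<lambda>i. y i - y' i) k))))"
  then obtain \<gamma>0 \<gamma>v \<gamma>y where g0: "class_KL \<gamma>0" and gv: "class_K \<gamma>v" and gy: "class_K \<gamma>y"
    and P: "\<And>x u w v y x' w' v' y' k.
               trajectory F H XX UU WW VV YY x u w v y \<Longrightarrow>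
               trajectory F H XX UU WW VV YY x' u w' v' y' \<Longrightarrow>
               norm (x k - x' k) \<le> max (\<gamma>0 (norm (x 0 - x' 0)) k)
                 (max (\<gamma>v (seg_norm (\<lambda>i. v i - v' i) k)) (\<gamma>y (seg_norm (\<lambda>i. y i - y' i) k)))"
    by blast
  have idK: "class_K (\<lambda>r. r)" unfolding class_K_def by (auto intro: strict_mono_onI)
  have "\<exists>\<beta>. class_KL \<beta> \<and> (\<forall>s\<ge>0. \<forall>t. psiE \<gamma>0 s t \<le> \<beta> s t)"
  proof (rule majorant[OF idK])
    show "\<And>s t. 0 \<le> psiE \<gamma>0 s t" by (rule psiE_nn)
    show "\<And>s s' t. s \<le> s' \<Longrightarrow> psiE \<gamma>0 s t \<le> psiE \<gamma>0 s' t" by (rule psiE_mono)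
    show "\<And>s t t'. t \<le> t' \<Longrightarrow> psiE \<gamma>0 s t' \<le> psiE \<gamma>0 s t" by (rule psiE_anti)
    show "\<And>s. (\<lambda>t. psiE \<gamma>0 s t) \<longlonglongrightarrow> 0" by (rule psiE_lim[OF g0])
    show "\<And>s t. 0 \<le> s \<Longrightarrow> psiE \<gamma>0 s t \<le> s" by (rule psiE_le)
  qed
  then obtain \<sigma> where \<sigma>: "class_KL \<sigma>" and \<sigma>ge: "\<And>s t. 0 \<le> s \<Longrightarrow> psiE \<gamma>0 s t \<le> \<sigma> s t"
    by blast
  have "\<exists>\<beta>. class_KL \<beta> \<and> (\<forall>s\<ge>0. \<forall>t. psi0 \<gamma>0 s t \<le> \<beta> s t)"
  proof (rule majorant[OF KL_K[OF g0, of 0]])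
    show "\<And>s t. 0 \<le> s \<Longrightarrow> 0 \<le> psi0 \<gamma>0 s t" by (rule psi0_nn[OF g0])
    show "\<And>s s' t. 0 \<le> s \<Longrightarrow> s \<le> s' \<Longrightarrow> psi0 \<gamma>0 s t \<le> psi0 \<gamma>0 s' t" by (rule psi0_mono[OF g0])
    show "\<And>s t t'. 0 \<le> s \<Longrightarrow> t \<le> t' \<Longrightarrow> psi0 \<gamma>0 s t' \<le> psi0 \<gamma>0 s t" by (rule psi0_anti[OF g0])
    show "\<And>s. 0 \<le> s \<Longrightarrow> (\<lambda>t. psi0 \<gamma>0 s t) \<longlonglongrightarrow> 0" by (rule psi0_lim[OF g0])
    show "\<And>s t. 0 \<le> s \<Longrightarrow> psi0 \<gamma>0 s t \<le> \<gamma>0 s 0" by (rule psi0_le[OF g0])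
  qed
  then obtain G0 where G0: "class_KL G0" and G0ge: "\<And>s t. 0 \<le> s \<Longrightarrow> psi0 \<gamma>0 s t \<le> G0 s t"
    by blast
  define Gv where "Gv r t = \<sigma> (\<gamma>v r) t" for r t
  define Gy where "Gy r t = \<sigma> (\<gamma>y r) t" for r t
  have Gv: "class_KL Gv" unfolding Gv_def by (rule KL_comp[OF \<sigma> gv])
  have Gy: "class_KL Gy" unfolding Gy_def by (rule KL_comp[OF \<sigma> gy])
  show "\<exists>g0 gv gy. class_KL g0 \<and> class_KL gv \<and> class_KL gy \<and>
            (\<forall>x u w v y x' w' v' y' k.
               trajectory F H XX UU WW VV YY x u w v y \<longrightarrow>
               trajectory F H XX UU WW VV YY x' u w' v' y' \<longrightarrow>
               norm (x k - x' k) \<le> max (fading_max gv (\<lambda>i. v i - v' i) k)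
                 (max (g0 (norm (x 0 - x' 0)) k) (fading_max gy (\<lambda>i. y i - y' i) k)))"
  proof (intro exI conjI allI impI)
    show "class_KL G0" "class_KL Gv" "class_KL Gy" by (fact G0 Gv Gy)+
    fix x u w v y x' w' v' y' k
    assume T1: "trajectory F H XX UU WW VV YY x u w v y"
      and T2: "trajectory F H XX UU WW VV YY x' u w' v' y'"
    define s where "s k = norm (x k - x' k)" for k
    define e where "e i = max (\<gamma>v (norm (v i - v' i))) (\<gamma>y (norm (y i - y' i)))" for i
    have sn: "0 \<le> s k" for k by (simp add: s_def)
    have en: "0 \<le> e i" for i using K_nn[OF gv] by (simp add: e_def le_max_iff_disj)
    have rs: "s k \<le> max (\<gamma>0 (s j) (k - j)) (Max (insert 0 (e ` {j..<k})))" if "j \<le> k" for j k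
    proof -
      have "s k \<le> max (\<gamma>0 (s j) (k - j))
                 (max (\<gamma>v (seg_norm (\<lambda>i. v (i + j) - v' (i + j)) (k - j)))
                      (\<gamma>y (seg_norm (\<lambda>i. y (i + j) - y' (i + j)) (k - j))))"
        using P[OF traj_shift[OF T1, of j] traj_shift[OF T2, of j], of "k - j"] that
        by (simp add: s_def)
      moreover have "\<gamma>v (seg_norm (\<lambda>i. v (i + j) - v' (i + j)) (k - j)) \<le> Max (insert 0 (e ` {j..<k}))"
        by (rule seg_bound[OF gv that, of "\<lambda>i. v i - v' i"]) (simp add: e_def)
      moreover have "\<gamma>y (seg_norm (\<lambda>i. y (i + j) - y' (i + j)) (k - j)) \<le> Max (insert 0 (e ` {j..<k}))"
        by (rule seg_bound[OF gy that, of "\<lambda>i. y i - y' i"]) (simp add: e_def)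
      ultimately show ?thesis by (smt (verit) max.cobounded1 max.cobounded2 max_def)
    qed
    define M where "M = Max (insert 0 ((\<lambda>i. \<sigma> (e i) (k - 1 - i)) ` {..<k}))"
    have M0: "0 \<le> M" unfolding M_def by (rule Max_ge) auto
    have Mge: "\<sigma> (e i) (k - 1 - i) \<le> M" if "i < k" for i
      unfolding M_def using that by (intro Max_ge) auto
    have key: "s k \<le> max (G0 (s 0) k) M"
    proof (rule ccontr)
      assume "\<not> s k \<le> max (G0 (s 0) k) M"
      define B where "B = max (G0 (s 0) k) M"
      define b where "b = (B + s k) / 2"
      have B: "0 \<le> B" "B < s k" "G0 (s 0) k \<le> B" "M \<le> B"
        using M0 \<open>\<not> s k \<le> max (G0 (s 0) k) M\<close> by (auto simp: B_def)
      have b: "0 < b" "B < b" "b < s k" using B by (auto simp: b_def)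
      have "s k \<le> b"
      proof (rule chain[OF g0 sn rs, of b k])
        show "0 < b" by (rule b(1))
        show "\<forall>i<k. e i \<le> reach \<gamma>0 b (k - 1 - i)"
        proof (intro allI impI)
          fix i assume "i < k"
          have "psiE \<gamma>0 (e i) (k - 1 - i) \<le> \<sigma> (e i) (k - 1 - i)" by (rule \<sigma>ge[OF en])
          also have "\<dots> \<le> M" by (rule Mge[OF \<open>i < k\<close>])
          finally have "psiE \<gamma>0 (e i) (k - 1 - i) < b" using B b by linarith
          then show "e i \<le> reach \<gamma>0 b (k - 1 - i)" by (rule psiE_key[OF b(1)])
        qed
        have "psi0 \<gamma>0 (s 0) k \<le> G0 (s 0) k" by (rule G0ge[OF sn])
        then have "psi0 \<gamma>0 (s 0) k < b" using B b by linarith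
        then show "Gok \<gamma>0 (s 0) k b" by (rule psi0_key[OF g0 sn b(1)])
      qed (auto)
      then show False using b by simp
    qed
    have "M \<le> max (fading_max Gv (\<lambda>i. v i - v' i) k) (fading_max Gy (\<lambda>i. y i - y' i) k)"
      unfolding M_def
    proof (rule Max_ins0_le)
      show "0 \<le> max (fading_max Gv (\<lambda>i. v i - v' i) k) (fading_max Gy (\<lambda>i. y i - y' i) k)"
        using fading_nn[of Gv "\<lambda>i. v i - v' i" k] by (simp add: le_max_iff_disj)
      fix z assume "z \<in> (\<lambda>i. \<sigma> (e i) (k - 1 - i)) ` {..<k}"
      then obtain i where i: "i < k" "z = \<sigma> (e i) (k - 1 - i)" by auto
      have "z = max (Gv (norm (v i - v' i)) (k - i - 1)) (Gy (norm (y i - y' i)) (k - i - 1))"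
        unfolding i(2) e_def Gv_def Gy_def
        by (subst max_sigma[OF \<sigma>]) (auto intro: K_nn[OF gv] K_nn[OF gy] simp: diff_commute)
      also have "\<dots> \<le> max (fading_max Gv (\<lambda>i. v i - v' i) k) (fading_max Gy (\<lambda>i. y i - y' i) k)"
        using fading_ge[OF i(1), of Gv "\<lambda>i. v i - v' i"] fading_ge[OF i(1), of Gy "\<lambda>i. y i - y' i"]
        by (intro max.mono) auto
      finally show "z \<le> max (fading_max Gv (\<lambda>i. v i - v' i) k) (fading_max Gy (\<lambda>i. y i - y' i) k)" .
    qed auto
    then show "norm (x k - x' k) \<le> max (fading_max Gv (\<lambda>i. v i - v' i) k)
                 (max (G0 (norm (x 0 - x' 0)) k) (fading_max Gy (\<lambda>i. y i - y' i) k))"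
      using key unfolding s_def by (smt (verit) max_def)
  qed
next
  assume "\<exists>g0 gv gy. class_KL g0 \<and> class_KL gv \<and> class_KL gy \<and>
            (\<forall>x u w v y x' w' v' y' k.
               trajectory F H XX UU WW VV YY x u w v y \<longrightarrow>
               trajectory F H XX UU WW VV YY x' u w' v' y' \<longrightarrow>
               norm (x k - x' k) \<le> max (fading_max gv (\<lambda>i. v i - v' i) k)
                 (max (g0 (norm (x 0 - x' 0)) k) (fading_max gy (\<lambda>i. y i - y' i) k)))"
  then obtain g0 gv gy where g0: "class_KL g0" and gv: "class_KL gv" and gy: "class_KL gy"
    and P: "\<And>x u w v y x' w' v' y' k.
               trajectory F H XX UU WW VV YY x u w v y \<Longrightarrow>
               trajectory F H XX UU WW VV YY x' u w' v' y' \<Longrightarrow>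
               norm (x k - x' k) \<le> max (fading_max gv (\<lambda>i. v i - v' i) k)
                 (max (g0 (norm (x 0 - x' 0)) k) (fading_max gy (\<lambda>i. y i - y' i) k))"
    by blast
  show "\<exists>\<gamma>0 \<gamma>v \<gamma>y. class_KL \<gamma>0 \<and> class_K \<gamma>v \<and> class_K \<gamma>y \<and>
            (\<forall>x u w v y x' w' v' y' k.
               trajectory F H XX UU WW VV YY x u w v y \<longrightarrow>
               trajectory F H XX UU WW VV YY x' u w' v' y' \<longrightarrow>
               norm (x k - x' k) \<le> max (\<gamma>0 (norm (x 0 - x' 0)) k)
                 (max (\<gamma>v (seg_norm (\<lambda>i. v i - v' i) k)) (\<gamma>y (seg_norm (\<lambda>i. y i - y' i) k))))"
  proof (intro exI conjI allI impI)
    show "class_KL g0" by (fact g0)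
    show "class_K (\<lambda>r. gv r 0)" by (rule KL_K[OF gv])
    show "class_K (\<lambda>r. gy r 0)" by (rule KL_K[OF gy])
    fix x u w v y x' w' v' y' k
    assume T1: "trajectory F H XX UU WW VV YY x u w v y"
      and T2: "trajectory F H XX UU WW VV YY x' u w' v' y'"
    have "fading_max gv (\<lambda>i. v i - v' i) k \<le> gv (seg_norm (\<lambda>i. v i - v' i) k) 0"
      by (rule fading_le[OF gv])
    moreover have "fading_max gy (\<lambda>i. y i - y' i) k \<le> gy (seg_norm (\<lambda>i. y i - y' i) k) 0"
      by (rule fading_le[OF gy])
    ultimately show "norm (x k - x' k) \<le> max (g0 (norm (x 0 - x' 0)) k)
                 (max (gv (seg_norm (\<lambda>i. v i - v' i) k) 0) (gy (seg_norm (\<lambda>i. y i - y' i) k) 0))"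
      using P[OF T1 T2, of k] by (smt (verit) max_def)
  qed
qed

end
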